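(* For every integer $m\ge1$, the binary reflected Gray code ${\boldsymbol{B}}_m$ and the natural binary code ${\boldsymbol{N}}_m$ of order $m$ belong to the same modified Hadamard class.
   Context: Let $M=2^m$. The natural binary code (NBC) of order $m$ is the $M\times m$ binary matrix ${\boldsymbol{N}}_m$ whose $q$th row $\boldsymbol{n}_q=[n_{q,1},\ldots,n_{q,m}]$ is the base-2 representation of $q-1$, with $n_{q,m}$ the least significant bit. The binary reflected Gray code (BRGC) of order $m$ is the $M\times m$ matrix ${\boldsymbol{B}}_m$ with rows $\boldsymbol{b}_q$ given by $b_{q,1}=n_{q,1}$ and $b_{q,l}=n_{q,l-1}\oplus n_{q,l}$ for $l=2,\ldots,m$. A labeling is an $M\times m$ binary matrix with pairwise distinct rows; its columns are then nonzero. The first nonzero entry of a column is its pivot. A binary labeling matrix ${\boldsymbol{L}}$ is a reduced column echelon matrix if (1) every row containing a pivot has all its other entries zero, and (2) the pivot of column $l$ lies in a row below the pivot of column $l+1$, for $l=1,\ldots,m-1$. Every labeling ${\boldsymbol{L}}$ factors uniquely as ${\boldsymbol{L}}={\boldsymbol{L}}_{\mathrm{R}}{\boldsymbol{T}}$ with ${\boldsymbol{L}}_{\mathrm{R}}$ a reduced column echelon matrix and ${\boldsymbol{T}}$ an invertible $m\times m$ binary matrix (over GF(2)). The modified Hadamard class associated with a reduced column echelon matrix ${\boldsymbol{L}}_{\mathrm{R}}$ is the set $\{{\boldsymbol{L}}_{\mathrm{R}}{\boldsymbol{T}}:{\boldsymbol{T}}\text{ invertible }m\times m\text{ binary}\}$.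 *)

theory Defs
  imports Main
begin

text \<open>Binary matrices are represented as functions nat \<Rightarrow> nat \<Rightarrow> bool
  (True = 1, False = 0), with 0-based row and column indices; only entries
  inside the stated dimensions are meaningful. Row q (0 \<le> q < 2^m) corresponds
  to the paper's row q+1, column j (0 \<le> j < m) to the paper's column j+1.\<close>

type_synonym bmat = "nat \<Rightarrow> nat \<Rightarrow> bool"

definition NBC :: "nat \<Rightarrow> bmat" where
  "NBC m q j = odd (q div 2 ^ (m - 1 - j))"

definition BRGC :: "nat \<Rightarrow> bmat" where
  "BRGC m q j = (if j = 0 then NBC m q 0 else (NBC m q (j - 1) \<noteq> NBC m q j))"

definition gf2_mult :: "nat \<Rightarrow> bmat \<Rightarrow> bmat \<Rightarrow> bmat" where
  "gf2_mult k A B i j = odd (card {t. t < k \<and> A i t \<and> B t j})"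

definition gf2_id :: bmat where
  "gf2_id i j = (i = j)"

definition gf2_invertible :: "nat \<Rightarrow> bmat \<Rightarrow> bool" where
  "gf2_invertible m T \<longleftrightarrow> (\<exists>S. (\<forall>i<m. \<forall>j<m. gf2_mult m T S i j = gf2_id i j) \<and>
                                  (\<forall>i<m. \<forall>j<m. gf2_mult m S T i j = gf2_id i j))"

definition is_labeling :: "nat \<Rightarrow> bmat \<Rightarrow> bool" where
  "is_labeling m L \<longleftrightarrow>
     (\<forall>q<2^m. \<forall>q'<2^m. q \<noteq> q' \<longrightarrow> (\<exists>j<m. L q j \<noteq> L q' j))"

definition pivot :: "bmat \<Rightarrow> nat \<Rightarrow> nat" where
  "pivot L j = (LEAST q. L q j)"

definition reduced_col_echelon :: "nat \<Rightarrow> bmat \<Rightarrow> bool" where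
  "reduced_col_echelon m L \<longleftrightarrow>
     is_labeling m L \<and>
     (\<forall>j<m. \<forall>j'<m. j' \<noteq> j \<longrightarrow> \<not> L (pivot L j) j') \<and>
     (\<forall>j. j + 1 < m \<longrightarrow> pivot L (j + 1) < pivot L j)"

definition in_modified_hadamard_class :: "nat \<Rightarrow> bmat \<Rightarrow> bmat \<Rightarrow> bool" where
  "in_modified_hadamard_class m LR L \<longleftrightarrow>
     (\<exists>T. gf2_invertible m T \<and> (\<forall>q<2^m. \<forall>j<m. L q j = gf2_mult m LR T q j))"

end

theory Submission
  imports Defs
begin

lemma bits_eq:
  fixes q q' :: nat
  shows "q < 2^m \<Longrightarrow> q' < 2^m \<Longrightarrow> (\<forall>k<m. odd (q div 2^k) = odd (q' div 2^k)) \<Longrightarrow> q = q'"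
proof (induction m arbitrary: q q')
  case 0 then show ?case by simp
next
  case (Suc m)
  have h0: "odd q = odd q'" using Suc.prems(3)[rule_format, of 0] by simp
  have "q div 2 = q' div 2"
  proof (rule Suc.IH)
    show "q div 2 < 2^m" "q' div 2 < 2^m" using Suc.prems by auto
    show "\<forall>k<m. odd (q div 2 div 2 ^ k) = odd (q' div 2 div 2 ^ k)"
    proof (intro allI impI)
      fix k assume "k < m"
      then have "odd (q div 2^Suc k) = odd (q' div 2^Suc k)" using Suc.prems(3) by auto
      then show "odd (q div 2 div 2 ^ k) = odd (q' div 2 div 2 ^ k)"
        by (simp add: div_mult2_eq)
    qed
  qed
  then show ?case using h0
    by (metis div_mult_mod_eq odd_iff_mod_2_eq_one even_iff_mod_2_eq_zero)
qed

lemma pow_div_pow_odd: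
  "odd ((2::nat)^k div 2^k') = (k = k')"
proof (cases "k' \<le> k")
  case True
  then have "(2::nat)^k div 2^k' = 2^(k-k')"
    by (simp add: power_diff)
  then show ?thesis using True by auto
next
  case False
  then have "(2::nat)^k < 2^k'" by simp
  then show ?thesis using False by simp
qed

lemma pivot_NBC:
  assumes "j < m"
  shows "pivot (NBC m) j = 2^(m-1-j)"
  unfolding pivot_def NBC_def
proof (rule Least_equality)
  show "odd ((2::nat) ^ (m - 1 - j) div 2 ^ (m - 1 - j))" by simp
next
  fix y :: nat assume "odd (y div 2 ^ (m - 1 - j))"
  then show "2 ^ (m - 1 - j) \<le> y"
    by (metis div_less linorder_not_le even_zero)
qed

lemma rce_NBC:
  assumes "m \<ge> 1"
  shows "reduced_col_echelon m (NBC m)"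
  unfolding reduced_col_echelon_def
proof (intro conjI allI impI)
  show "is_labeling m (NBC m)"
    unfolding is_labeling_def
  proof (intro allI impI)
    fix q q' :: nat assume h: "q < 2^m" "q' < 2^m" "q \<noteq> q'"
    have "\<not> (\<forall>k<m. odd (q div 2^k) = odd (q' div 2^k))"
      using bits_eq[OF h(1,2)] h(3) by blast
    then obtain k where k: "k < m" "odd (q div 2^k) \<noteq> odd (q' div 2^k)" by blast
    then have "m - 1 - (m - 1 - k) = k" by simp
    then show "\<exists>j<m. NBC m q j \<noteq> NBC m q' j"
      using k unfolding NBC_def
      by (metis diff_less less_nat_zero_code not_gr_zero zero_less_one assms
          diff_le_self le_less_trans less_imp_diff_less)
  qed
next
  fix j j' assume h: "j < m" "j' < m" "j' \<noteq> j"
  then have "m - 1 - j \<noteq> m - 1 - j'" by arith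
  then show "\<not> NBC m (pivot (NBC m) j) j'"
    using h by (simp add: pivot_NBC NBC_def pow_div_pow_odd)
next
  fix j assume h: "j + 1 < m"
  then show "pivot (NBC m) (j + 1) < pivot (NBC m) j"
    by (simp add: pivot_NBC)
qed

lemma mult_id: "j < m \<Longrightarrow> gf2_mult m A gf2_id q j = A q j"
proof -
  assume j: "j < m"
  have "{t. t < m \<and> A q t \<and> gf2_id t j} = (if A q j then {j} else {})"
    using j by (auto simp: gf2_id_def)
  then show ?thesis by (simp add: gf2_mult_def)
qed

lemma id_inv: "gf2_invertible m gf2_id"
  unfolding gf2_invertible_def
  by (rule exI[of _ gf2_id]) (simp add: mult_id)

definition Tg :: bmat where
  "Tg t j = (t = j \<or> (j \<ge> 1 \<and> t = j - 1))"

definition Sg :: bmat where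
  "Sg t j = (t \<le> j)"

lemma Tg_inv: "gf2_invertible m Tg"
  unfolding gf2_invertible_def
proof (rule exI[of _ Sg], intro conjI allI impI)
  fix i j assume h: "i < m" "j < m"
  have "{t. t < m \<and> Tg i t \<and> Sg t j} =
        (if i > j then {} else if i = j then {i} else {i, i+1})"
    using h by (auto simp: Tg_def Sg_def)
  then show "gf2_mult m Tg Sg i j = gf2_id i j"
    by (simp add: gf2_mult_def gf2_id_def)
next
  fix i j assume h: "i < m" "j < m"
  have "{t. t < m \<and> Sg i t \<and> Tg t j} =
        (if i > j then {} else if i = j then {j} else {j - 1, j})"
    using h by (auto simp: Tg_def Sg_def)
  then show "gf2_mult m Sg Tg i j = gf2_id i j"
    using h by (auto simp: gf2_mult_def gf2_id_def)
qed

lemma BRGC_mult: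
  assumes "j < m"
  shows "BRGC m q j = gf2_mult m (NBC m) Tg q j"
proof (cases "j = 0")
  case True
  have "{t. t < m \<and> NBC m q t \<and> Tg t j} = (if NBC m q 0 then {0} else {})"
    using True assms by (auto simp: Tg_def)
  then show ?thesis using True by (simp add: gf2_mult_def BRGC_def)
next
  case False
  have "{t. t < m \<and> NBC m q t \<and> Tg t j} =
     (if NBC m q j then {j} else {}) \<union> (if NBC m q (j-1) then {j-1} else {})"
    using False assms by (auto simp: Tg_def)
  then show ?thesis using False by (auto simp: gf2_mult_def BRGC_def)
qed

theorem theorem3:
  fixes m :: nat
  assumes "m \<ge> 1"
  shows "\<exists>LR. reduced_col_echelon m LR \<and>
              in_modified_hadamard_class m LR (BRGC m) \<and>
              in_modified_hadamard_class m LR (NBC m)"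
proof (intro exI conjI)
  show "reduced_col_echelon m (NBC m)" using rce_NBC[OF assms] .
  show "in_modified_hadamard_class m (NBC m) (BRGC m)"
    unfolding in_modified_hadamard_class_def
    using Tg_inv BRGC_mult by blast
  show "in_modified_hadamard_class m (NBC m) (NBC m)"
    unfolding in_modified_hadamard_class_def
    using id_inv mult_id by metis
qed

end
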